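(* Let $\mathcal{Z}\subset\mathbb{R}^d$, let $\pi$ be a probability distribution on $\mathcal{Z}$, let $\ell:\mathcal{Z}\times\mathcal{Z}\to[0,1]$ be a normalized error function, and let $N$ be the training set size. Let $M$ be a randomized training mechanism mapping datasets in $\mathcal{Z}^N$ to weights $\theta\in\Theta$. For a reconstruction attack $\mathcal{R}:\Theta\to\mathcal{Z}$ define $$TPR_{cum}(\tau)=\mathbb{P}\Big[\min_{Z\in\mathcal{D}_N}\ell(Z,\mathcal{R}(\theta))<\tau\Big]\ \text{with}\ \mathcal{D}_N\sim\pi^{N},\ \theta\sim M(\mathcal{D}_N),$$ $$FPR_{cum}(\tau)=\mathbb{P}\Big[\min_{Z\in\mathcal{D}_N}\ell(Z,\mathcal{R}(\theta))<\tau\Big]\ \text{with}\ \mathcal{D}_N\sim\pi^{N},\ \mathcal{D}_N'\sim\pi^{N}\ \text{independent},\ \theta\sim M(\mathcal{D}_N').$$ Assume there exists $Z_0\in\mathcal{Z}$ such that $\kappa_\tau(Z_0):=\mathbb{P}_{Z\sim\pi}[\ell(Z,Z_0)\le\tau]$ satisfies $0<\kappa_\tau(Z_0)<1$ for every $\tau\in(0,1)$. Define the baseline attack $\mathcal{R}_0(\theta)=Z_0$ for all $\theta$. Then for every $\tau\in(0,1)$, for this attack, $$TPR_{cum}(\tau)\xrightarrow{N\to\infty}1,\qquad FPR_{cum}(\tau)\xrightarrow{N\to\infty}1.$$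
   Context: $\pi^N$ denotes the product distribution (training set of $N$ i.i.d. samples from $\pi$). *)

theory Defs
  imports "HOL-Probability.Probability"
begin

definition data_dist :: "'a measure \<Rightarrow> nat \<Rightarrow> (nat \<Rightarrow> 'a) measure" where
  "data_dist \<pi> N = PiM {..<N} (\<lambda>_. \<pi>)"

definition min_err :: "('a \<Rightarrow> 'a \<Rightarrow> real) \<Rightarrow> nat \<Rightarrow> (nat \<Rightarrow> 'a) \<Rightarrow> 'a \<Rightarrow> real" where
  "min_err l N D z = Min ((\<lambda>i. l (D i) z) ` {..<N})"

definition TPR_cum :: "'a measure \<Rightarrow> 'b measure \<Rightarrow> (nat \<Rightarrow> (nat \<Rightarrow> 'a) \<Rightarrow> 'b measure)
    \<Rightarrow> ('b \<Rightarrow> 'a) \<Rightarrow> ('a \<Rightarrow> 'a \<Rightarrow> real) \<Rightarrow> nat \<Rightarrow> real \<Rightarrow> real" where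
  "TPR_cum \<pi> \<Theta> M R l N \<tau> =
     measure (data_dist \<pi> N \<bind> (\<lambda>D. M N D \<bind> (\<lambda>\<theta>. return (data_dist \<pi> N \<Otimes>\<^sub>M \<Theta>) (D, \<theta>))))
       {(D, \<theta>) \<in> space (data_dist \<pi> N \<Otimes>\<^sub>M \<Theta>). min_err l N D (R \<theta>) < \<tau>}"

definition FPR_cum :: "'a measure \<Rightarrow> 'b measure \<Rightarrow> (nat \<Rightarrow> (nat \<Rightarrow> 'a) \<Rightarrow> 'b measure)
    \<Rightarrow> ('b \<Rightarrow> 'a) \<Rightarrow> ('a \<Rightarrow> 'a \<Rightarrow> real) \<Rightarrow> nat \<Rightarrow> real \<Rightarrow> real" where
  "FPR_cum \<pi> \<Theta> M R l N \<tau> =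
     measure ((data_dist \<pi> N \<Otimes>\<^sub>M data_dist \<pi> N) \<bind>
                (\<lambda>(D, D'). M N D' \<bind> (\<lambda>\<theta>. return (data_dist \<pi> N \<Otimes>\<^sub>M \<Theta>) (D, \<theta>))))
       {(D, \<theta>) \<in> space (data_dist \<pi> N \<Otimes>\<^sub>M \<Theta>). min_err l N D (R \<theta>) < \<tau>}"

definition kappa :: "'a measure \<Rightarrow> ('a \<Rightarrow> 'a \<Rightarrow> real) \<Rightarrow> real \<Rightarrow> 'a \<Rightarrow> real" where
  "kappa \<pi> l \<tau> z0 = measure \<pi> {z \<in> space \<pi>. l z z0 \<le> \<tau>}"

end

theory Submission
  imports Defs
begin

lemma bind_event:
  assumes P: "prob_space P" and K: "K \<in> measurable P (prob_algebra T)"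
    and g: "g \<in> measurable P D" and A: "A \<in> sets D"
  shows "emeasure (P \<bind> (\<lambda>x. K x \<bind> (\<lambda>t. return (D \<Otimes>\<^sub>M T) (g x, t)))) (A \<times> space T)
       = emeasure P {x\<in>space P. g x \<in> A}"
proof -
  have Ks: "K \<in> measurable P (subprob_algebra T)" using K by (rule measurable_prob_algebraD)
  have ret: "(\<lambda>y. return (D \<Otimes>\<^sub>M T) (g (fst y), snd y)) \<in> measurable (P \<Otimes>\<^sub>M T) (subprob_algebra (D \<Otimes>\<^sub>M T))"
    using g by measurable
  have f: "(\<lambda>x. K x \<bind> (\<lambda>t. return (D \<Otimes>\<^sub>M T) (g x, t))) \<in> measurable P (subprob_algebra (D \<Otimes>\<^sub>M T))"
    by (rule measurable_bind[OF Ks]) (use ret in simp)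
  have X: "A \<times> space T \<in> sets (D \<Otimes>\<^sub>M T)" using A by auto
  have ne: "space P \<noteq> {}" using P prob_space.not_empty by blast
  have inner: "emeasure (K x \<bind> (\<lambda>t. return (D \<Otimes>\<^sub>M T) (g x, t))) (A \<times> space T) = indicator A (g x)"
    if x: "x \<in> space P" for x
  proof -
    have Kx: "K x \<in> space (prob_algebra T)" using K x by (rule measurable_space)
    have pKx: "prob_space (K x)" and sKx: "sets (K x) = sets T"
      using Kx by (auto simp: space_prob_algebra)
    have spKx: "space (K x) = space T" using sKx by (rule sets_eq_imp_space_eq)
    have r: "(\<lambda>t. return (D \<Otimes>\<^sub>M T) (g x, t)) \<in> measurable (K x) (subprob_algebra (D \<Otimes>\<^sub>M T))"
      using measurable_space[OF g x] by (simp add: measurable_cong_sets[OF sKx refl]) measurable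
    have "emeasure (K x \<bind> (\<lambda>t. return (D \<Otimes>\<^sub>M T) (g x, t))) (A \<times> space T)
        = \<integral>\<^sup>+t. emeasure (return (D \<Otimes>\<^sub>M T) (g x, t)) (A \<times> space T) \<partial>K x"
      using prob_space.not_empty[OF pKx] r X by (rule emeasure_bind)
    also have "\<dots> = \<integral>\<^sup>+t. indicator A (g x) \<partial>K x"
      using X by (intro nn_integral_cong) (auto simp: spKx indicator_def)
    also have "\<dots> = indicator A (g x)"
      using pKx by (simp add: prob_space.emeasure_space_1)
    finally show ?thesis .
  qed
  have "emeasure (P \<bind> (\<lambda>x. K x \<bind> (\<lambda>t. return (D \<Otimes>\<^sub>M T) (g x, t)))) (A \<times> space T)
      = \<integral>\<^sup>+x. emeasure (K x \<bind> (\<lambda>t. return (D \<Otimes>\<^sub>M T) (g x, t))) (A \<times> space T) \<partial>P"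
    using ne f X by (rule emeasure_bind)
  also have "\<dots> = \<integral>\<^sup>+x. indicator {x\<in>space P. g x \<in> A} x \<partial>P"
    by (intro nn_integral_cong) (auto simp: inner indicator_def)
  also have "\<dots> = emeasure P {x\<in>space P. g x \<in> A}"
    using measurable_sets[OF g A] by (simp add: vimage_def Int_def conj_commute)
  finally show ?thesis .
qed

theorem lemma1:
  fixes Z :: "'a::euclidean_space set"
    and \<pi> :: "'a measure"
    and l :: "'a \<Rightarrow> 'a \<Rightarrow> real"
    and \<Theta> :: "'b measure"
    and M :: "nat \<Rightarrow> (nat \<Rightarrow> 'a) \<Rightarrow> 'b measure"
    and Z0 :: 'a
  assumes prob: "prob_space \<pi>"
    and space_pi: "space \<pi> = Z"
    and sets_pi: "sets \<pi> = sets (restrict_space borel Z)"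
    and l_range: "\<forall>x\<in>Z. \<forall>y\<in>Z. 0 \<le> l x y \<and> l x y \<le> 1"
    and l_meas: "(\<lambda>(x, y). l x y) \<in> borel_measurable (\<pi> \<Otimes>\<^sub>M \<pi>)"
    and M_kernel: "\<forall>N. M N \<in> measurable (data_dist \<pi> N) (prob_algebra \<Theta>)"
    and Z0: "Z0 \<in> Z"
    and kappa_bounds: "\<forall>\<tau>\<in>{0<..<1}. 0 < kappa \<pi> l \<tau> Z0 \<and> kappa \<pi> l \<tau> Z0 < 1"
  shows "\<forall>\<tau>\<in>{0<..<1}.
           (\<lambda>N. TPR_cum \<pi> \<Theta> M (\<lambda>_. Z0) l N \<tau>) \<longlonglongrightarrow> 1 \<and>
           (\<lambda>N. FPR_cum \<pi> \<Theta> M (\<lambda>_. Z0) l N \<tau>) \<longlonglongrightarrow> 1"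
proof
  fix \<tau> :: real assume \<tau>: "\<tau> \<in> {0<..<1}"
  interpret P: prob_space \<pi> by (rule prob)
  interpret PS: product_sigma_finite "\<lambda>_. \<pi>" by standard
  have fz: "(\<lambda>z. l z Z0) \<in> borel_measurable \<pi>"
  proof -
    have "(\<lambda>z. (z, Z0)) \<in> measurable \<pi> (\<pi> \<Otimes>\<^sub>M \<pi>)"
      using Z0 space_pi by (intro measurable_Pair measurable_ident_sets measurable_const) auto
    from measurable_comp[OF this l_meas] show ?thesis by (simp add: o_def)
  qed
  define B where "B = {z\<in>Z. \<tau> \<le> l z Z0}"
  define C where "C = {z\<in>Z. l z Z0 \<le> \<tau>/2}"
  have Bs: "B \<in> sets \<pi>" unfolding B_def using fz sets.top[of \<pi>, unfolded space_pi] by measurable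
  have Cs: "C \<in> sets \<pi>" unfolding C_def using fz sets.top[of \<pi>, unfolded space_pi] by measurable
  have kC: "kappa \<pi> l (\<tau>/2) Z0 = measure \<pi> C" unfolding kappa_def C_def space_pi ..
  have "0 < measure \<pi> C" using kappa_bounds[rule_format, of "\<tau>/2"] \<tau> kC by auto
  moreover have "B \<subseteq> space \<pi> - C" unfolding B_def C_def space_pi using \<tau> by auto
  hence "measure \<pi> B \<le> measure \<pi> (space \<pi> - C)" using Cs by (intro P.finite_measure_mono) auto
  ultimately have p1: "measure \<pi> B < 1" using P.prob_compl[OF Cs] by simp
  have p0: "0 \<le> measure \<pi> B" by simp
  have lim0: "(\<lambda>N. 1 - measure \<pi> B ^ N) \<longlonglongrightarrow> 1"
    using tendsto_diff[OF tendsto_const LIMSEQ_power_zero[of "measure \<pi> B"]] p0 p1 by simp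
  define A where "A N = space (data_dist \<pi> N) - PiE {..<N} (\<lambda>_. B)" for N
  have spD: "space (data_dist \<pi> N) = PiE {..<N} (\<lambda>_. Z)" for N
    unfolding data_dist_def by (simp add: space_PiM space_pi)
  have pD: "prob_space (data_dist \<pi> N)" for N
    unfolding data_dist_def by (rule prob_space_PiM) (rule prob)
  have PiBs: "PiE {..<N} (\<lambda>_. B) \<in> sets (data_dist \<pi> N)" for N
    unfolding data_dist_def using Bs by (intro sets_PiM_I_finite) auto
  have As: "A N \<in> sets (data_dist \<pi> N)" for N
    unfolding A_def using PiBs by auto
  have mA: "measure (data_dist \<pi> N) (A N) = 1 - measure \<pi> B ^ N" for N
  proof -
    have "emeasure (data_dist \<pi> N) (PiE {..<N} (\<lambda>_. B)) = (\<Prod>i<N. emeasure \<pi> B)"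
      unfolding data_dist_def using Bs by (intro PS.emeasure_PiM) auto
    also have "\<dots> = ennreal (measure \<pi> B ^ N)"
      by (simp add: P.emeasure_eq_measure ennreal_power)
    finally have "measure (data_dist \<pi> N) (PiE {..<N} (\<lambda>_. B)) = measure \<pi> B ^ N"
      unfolding measure_def by simp
    then show ?thesis unfolding A_def using prob_space.prob_compl[OF pD PiBs] by simp
  qed
  have Ev: "{(D, \<theta>) \<in> space (data_dist \<pi> N \<Otimes>\<^sub>M \<Theta>). min_err l N D Z0 < \<tau>} = A N \<times> space \<Theta>"
    if N: "N \<ge> 1" for N
  proof -
    have "min_err l N D Z0 < \<tau> \<longleftrightarrow> D \<in> A N" if D: "D \<in> space (data_dist \<pi> N)" for D
    proof -
      have "min_err l N D Z0 < \<tau> \<longleftrightarrow> (\<exists>i<N. l (D i) Z0 < \<tau>)"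
        unfolding min_err_def using N by (subst Min_less_iff) (auto simp: lessThan_empty_iff)
      also have "\<dots> \<longleftrightarrow> D \<in> A N"
        using D unfolding A_def spD B_def by (auto simp: PiE_iff not_le)
      finally show ?thesis .
    qed
    then show ?thesis by (auto simp: space_pair_measure A_def)
  qed
  have T: "TPR_cum \<pi> \<Theta> M (\<lambda>_. Z0) l N \<tau> = 1 - measure \<pi> B ^ N" if N: "N \<ge> 1" for N
  proof -
    have "emeasure (data_dist \<pi> N \<bind> (\<lambda>D. M N D \<bind> (\<lambda>\<theta>. return (data_dist \<pi> N \<Otimes>\<^sub>M \<Theta>) (id D, \<theta>)))) (A N \<times> space \<Theta>)
        = emeasure (data_dist \<pi> N) {x\<in>space (data_dist \<pi> N). id x \<in> A N}"
      by (rule bind_event[OF pD M_kernel[rule_format] measurable_ident As])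
    also have "{x\<in>space (data_dist \<pi> N). id x \<in> A N} = A N" using sets.sets_into_space[OF As] by auto
    finally have E: "emeasure (data_dist \<pi> N \<bind> (\<lambda>D. M N D \<bind> (\<lambda>\<theta>. return (data_dist \<pi> N \<Otimes>\<^sub>M \<Theta>) (id D, \<theta>)))) (A N \<times> space \<Theta>)
       = emeasure (data_dist \<pi> N) (A N)" .
    have "measure (data_dist \<pi> N \<bind> (\<lambda>D. M N D \<bind> (\<lambda>\<theta>. return (data_dist \<pi> N \<Otimes>\<^sub>M \<Theta>) (id D, \<theta>)))) (A N \<times> space \<Theta>)
       = measure (data_dist \<pi> N) (A N)" using arg_cong[OF E, of enn2real] unfolding measure_def .
    then have "measure (data_dist \<pi> N \<bind> (\<lambda>D. M N D \<bind> (\<lambda>\<theta>. return (data_dist \<pi> N \<Otimes>\<^sub>M \<Theta>) (D, \<theta>)))) (A N \<times> space \<Theta>)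
       = 1 - measure \<pi> B ^ N" unfolding id_apply mA .
    then show ?thesis unfolding TPR_cum_def Ev[OF N] .
  qed
  have F: "FPR_cum \<pi> \<Theta> M (\<lambda>_. Z0) l N \<tau> = 1 - measure \<pi> B ^ N" if N: "N \<ge> 1" for N
  proof -
    let ?P = "data_dist \<pi> N \<Otimes>\<^sub>M data_dist \<pi> N"
    have fe: "(\<lambda>(D, D'). M N D' \<bind> (\<lambda>\<theta>. return (data_dist \<pi> N \<Otimes>\<^sub>M \<Theta>) (D, \<theta>)))
       = (\<lambda>x. (M N \<circ> snd) x \<bind> (\<lambda>\<theta>. return (data_dist \<pi> N \<Otimes>\<^sub>M \<Theta>) (fst x, \<theta>)))"
      by (auto simp: fun_eq_iff)
    have pP: "prob_space ?P"
      by (intro prob_space_pair pD)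
    have "emeasure (?P \<bind> (\<lambda>x. (M N \<circ> snd) x \<bind> (\<lambda>\<theta>. return (data_dist \<pi> N \<Otimes>\<^sub>M \<Theta>) (fst x, \<theta>)))) (A N \<times> space \<Theta>)
        = emeasure ?P {x\<in>space ?P. fst x \<in> A N}"
      by (rule bind_event[OF pP measurable_comp[OF measurable_snd M_kernel[rule_format]] measurable_fst As])
    also have "{x\<in>space ?P. fst x \<in> A N} = A N \<times> space (data_dist \<pi> N)"
      using sets.sets_into_space[OF As] by (auto simp: space_pair_measure)
    also have "emeasure ?P (A N \<times> space (data_dist \<pi> N)) = emeasure (data_dist \<pi> N) (A N)"
      using sigma_finite_measure.emeasure_pair_measure_Times[OF prob_space_imp_sigma_finite[OF pD] As sets.top]
        prob_space.emeasure_space_1[OF pD] by simp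
    finally have E: "emeasure (?P \<bind> (\<lambda>x. (M N \<circ> snd) x \<bind> (\<lambda>\<theta>. return (data_dist \<pi> N \<Otimes>\<^sub>M \<Theta>) (fst x, \<theta>)))) (A N \<times> space \<Theta>)
       = emeasure (data_dist \<pi> N) (A N)" .
    have "measure (?P \<bind> (\<lambda>x. (M N \<circ> snd) x \<bind> (\<lambda>\<theta>. return (data_dist \<pi> N \<Otimes>\<^sub>M \<Theta>) (fst x, \<theta>)))) (A N \<times> space \<Theta>)
       = 1 - measure \<pi> B ^ N" using arg_cong[OF E, of enn2real] unfolding measure_def[symmetric] mA .
    then show ?thesis unfolding FPR_cum_def Ev[OF N] fe .
  qed
  show "(\<lambda>N. TPR_cum \<pi> \<Theta> M (\<lambda>_. Z0) l N \<tau>) \<longlonglongrightarrow> 1 \<and>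
           (\<lambda>N. FPR_cum \<pi> \<Theta> M (\<lambda>_. Z0) l N \<tau>) \<longlonglongrightarrow> 1"
  proof
    show "(\<lambda>N. TPR_cum \<pi> \<Theta> M (\<lambda>_. Z0) l N \<tau>) \<longlonglongrightarrow> 1"
      by (rule Lim_transform_eventually[OF lim0]) (auto intro!: eventually_sequentiallyI[of 1] simp: T)
    show "(\<lambda>N. FPR_cum \<pi> \<Theta> M (\<lambda>_. Z0) l N \<tau>) \<longlonglongrightarrow> 1"
      by (rule Lim_transform_eventually[OF lim0]) (auto intro!: eventually_sequentiallyI[of 1] simp: F)
  qed
qed

end
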